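(* Let $\{(U_{k,i}, V_{k,i}); i \geq 1, k \geq 1\}$ be an array of i.i.d. two-dimensional random vectors. Let $\{a_n; n \geq 1\}$ be a nondecreasing sequence of positive constants such that $$\lim_{n \to \infty} a_{n+1}/a_n = 1 \quad \text{and} \quad \liminf_{n \to \infty} a_{2n}/a_n = b \in (1, \infty].$$ Then for every $c > 0$ and $q > 1$ the following three statements are equivalent: (1) $\sum_{n=1}^{\infty} P\big(\max_{1 \leq i \neq j \leq n} |U_{1,i} V_{1,j}| \geq a_n\big) < \infty$; (2) $\sum_{n=1}^{\infty} P\big(\max_{1 \leq i \neq j \leq cn} |U_{1,i} V_{1,j}| \geq \varepsilon a_n\big) < \infty$ for all $\varepsilon > 0$; (3) $\sum_{n=1}^{\infty} P\big(\max_{1 \leq m \leq q^n} \max_{1 \leq i \neq j \leq cm} |U_{m,i} V_{m,j}| \geq \varepsilon a_{[q^n]}\big) < \infty$ for all $\varepsilon > 0$.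
   Context: $[x]$ denotes the integer part of $x$. *)

theory Defs
  imports "HOL-Probability.Probability"
begin

end

theory Submission
  imports Defs
begin

definition hasp :: "'i set \<Rightarrow> real \<Rightarrow> ('i \<Rightarrow> real \<times> real) \<Rightarrow> bool" where
  "hasp S t w \<longleftrightarrow> (\<exists>s\<in>S. \<exists>s'\<in>S. s \<noteq> s' \<and> t \<le> \<bar>fst (w s) * snd (w s')\<bar>)"

lemma hasp_cong: "(\<And>s. s \<in> S \<Longrightarrow> w s = w' s) \<Longrightarrow> hasp S t w = hasp S t w'"
  unfolding hasp_def by (intro bex_cong refl) auto

lemma hasp_mono_set: "hasp S t w \<Longrightarrow> S \<subseteq> T \<Longrightarrow> hasp T t w"
  unfolding hasp_def by (metis subsetD)

lemma hasp_mono_t: "hasp S t w \<Longrightarrow> t' \<le> t \<Longrightarrow> hasp S t' w"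
  unfolding hasp_def by (meson order_trans)

lemma hasp_reindex:
  assumes "bij_betw g T S"
  shows "hasp T t (\<lambda>n. w (g n)) = hasp S t w"
proof
  assume "hasp T t (\<lambda>n. w (g n))"
  then obtain s s' where ss: "s \<in> T" "s' \<in> T" "s \<noteq> s'" "t \<le> \<bar>fst (w (g s)) * snd (w (g s'))\<bar>"
    unfolding hasp_def by auto
  have "g s \<noteq> g s'" using ss assms by (metis bij_betw_def inj_on_def)
  moreover have "g s \<in> S" "g s' \<in> S" using ss assms by (auto simp: bij_betw_def)
  ultimately show "hasp S t w" unfolding hasp_def using ss(4) by (intro bexI[of _ "g s"] bexI[of _ "g s'"]) auto
next
  assume "hasp S t w"
  then obtain s s' where ss: "s \<in> S" "s' \<in> S" "s \<noteq> s'" "t \<le> \<bar>fst (w s) * snd (w s')\<bar>"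
    unfolding hasp_def by auto
  obtain r r' where rr: "r \<in> T" "r' \<in> T" "s = g r" "s' = g r'"
    using assms ss by (metis bij_betw_imp_surj_on imageE)
  then have "r \<noteq> r'" using ss by auto
  then show "hasp T t (\<lambda>n. w (g n))" unfolding hasp_def using rr ss(4)
    by (intro bexI[of _ r] bexI[of _ r']) auto
qed

lemma hasp_split3:
  assumes "hasp (A \<union> B \<union> C) t w"
  shows "hasp (A \<union> B) t w \<or> hasp (A \<union> C) t w \<or> hasp (B \<union> C) t w"
proof -
  obtain s s' where ss: "s \<in> A \<union> B \<union> C" "s' \<in> A \<union> B \<union> C" "s \<noteq> s'" "t \<le> \<bar>fst (w s) * snd (w s')\<bar>"
    using assms unfolding hasp_def by auto
  have h: "hasp D t w" if "s \<in> D" "s' \<in> D" for D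
    unfolding hasp_def using that ss by (intro bexI[of _ s] bexI[of _ s']) auto
  have "(s \<in> A \<union> B \<and> s' \<in> A \<union> B) \<or> (s \<in> A \<union> C \<and> s' \<in> A \<union> C) \<or> (s \<in> B \<union> C \<and> s' \<in> B \<union> C)"
    using ss(1,2) by auto
  then show ?thesis using h by metis
qed

lemma hasp_UN:
  "{x \<in> A. hasp S t (f x)} = (\<Union>s\<in>S. \<Union>s'\<in>S - {s}. {x\<in>A. t \<le> \<bar>fst (f x s) * snd (f x s')\<bar>})"
proof (intro set_eqI iffI)
  fix x assume "x \<in> {x \<in> A. hasp S t (f x)}"
  then obtain s s' where "x\<in>A" "s\<in>S" "s'\<in>S" "s\<noteq>s'" "t \<le> \<bar>fst (f x s) * snd (f x s')\<bar>" by (auto simp: hasp_def)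
  then show "x \<in> (\<Union>s\<in>S. \<Union>s'\<in>S - {s}. {x\<in>A. t \<le> \<bar>fst (f x s) * snd (f x s')\<bar>})" by auto
next
  fix x assume "x \<in> (\<Union>s\<in>S. \<Union>s'\<in>S - {s}. {x\<in>A. t \<le> \<bar>fst (f x s) * snd (f x s')\<bar>})"
  then obtain s s' where "x\<in>A" "s\<in>S" "s'\<in>S" "s\<noteq>s'" "t \<le> \<bar>fst (f x s) * snd (f x s')\<bar>" by auto
  then show "x \<in> {x \<in> A. hasp S t (f x)}" unfolding hasp_def by (intro CollectI conjI bexI[of _ s] bexI[of _ s']) auto
qed


locale iidarr = prob_space M for M :: "'s measure" +
  fixes X :: "nat \<times> nat \<Rightarrow> 's \<Rightarrow> real \<times> real"
  assumes indepX: "indep_vars (\<lambda>_. borel \<Otimes>\<^sub>M borel) X ({1..} \<times> {1..})"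
  and identX: "\<And>k i. k \<ge> 1 \<Longrightarrow> i \<ge> 1 \<Longrightarrow>
      distr M (borel \<Otimes>\<^sub>M borel) (X (k,i)) = distr M (borel \<Otimes>\<^sub>M borel) (X (1,1))"
begin

abbreviation "II \<equiv> ({1..} \<times> {1..}) :: (nat \<times> nat) set"
abbreviation "MM \<equiv> (borel \<Otimes>\<^sub>M borel) :: (real \<times> real) measure"
definition "mu = distr M MM (X (1,1))"

definition EE :: "(nat \<times> nat) set \<Rightarrow> real \<Rightarrow> 's set" where
  "EE S t = {x \<in> space M. hasp S t (\<lambda>s. X s x)}"

definition DD :: "(nat \<times> nat) set \<Rightarrow> real \<Rightarrow> ((nat \<times> nat) \<Rightarrow> real \<times> real) set" where
  "DD S t = {w \<in> space (PiM S (\<lambda>_. MM)). hasp S t w}"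

lemma X_meas: "s \<in> II \<Longrightarrow> X s \<in> measurable M MM"
  using indepX by (auto simp: indep_vars_def)

lemma DD_sets: assumes "finite S" shows "DD S t \<in> sets (PiM S (\<lambda>_. MM))"
proof -
  have "DD S t = (\<Union>s\<in>S. \<Union>s'\<in>S - {s}. {w \<in> space (PiM S (\<lambda>_. MM)). t \<le> \<bar>fst (w s) * snd (w s')\<bar>})"
    unfolding DD_def by (rule hasp_UN)
  also have "\<dots> \<in> sets (PiM S (\<lambda>_. MM))"
  proof (intro sets.finite_UN assms finite_Diff ballI)
    fix s s' assume "s \<in> S" "s' \<in> S - {s}"
    then have [measurable]: "(\<lambda>w. w s) \<in> measurable (PiM S (\<lambda>_. MM)) MM" "(\<lambda>w. w s') \<in> measurable (PiM S (\<lambda>_. MM)) MM"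
      by (auto intro: measurable_component_singleton)
    show "{w \<in> space (PiM S (\<lambda>_. MM)). t \<le> \<bar>fst (w s) * snd (w s')\<bar>} \<in> sets (PiM S (\<lambda>_. MM))"
      by measurable
  qed
  finally show ?thesis .
qed

lemma EE_sets: assumes "finite S" "S \<subseteq> II" shows "EE S t \<in> events"
proof -
  have "EE S t = (\<Union>s\<in>S. \<Union>s'\<in>S - {s}. {x \<in> space M. t \<le> \<bar>fst (X s x) * snd (X s' x)\<bar>})"
    unfolding EE_def by (rule hasp_UN)
  also have "\<dots> \<in> events"
  proof (intro sets.finite_UN assms finite_Diff ballI)
    fix s s' assume "s \<in> S" "s' \<in> S - {s}"
    then have "s \<in> II" "s' \<in> II" using assms by auto
    then have [measurable]: "X s \<in> measurable M MM" "X s' \<in> measurable M MM" using X_meas by auto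
    show "{x \<in> space M. t \<le> \<bar>fst (X s x) * snd (X s' x)\<bar>} \<in> events"
      by measurable
  qed
  finally show ?thesis .
qed

lemma prob_space_mu: "prob_space mu"
  unfolding mu_def using X_meas[of "(1,1)"] by (intro prob_space_distr) auto

lemma EE_eq_DD: assumes "finite S" "S \<subseteq> II"
  shows "prob (EE S t) = measure (PiM S (\<lambda>_. mu)) (DD S t)"
proof (cases "S = {}")
  case True
  have "EE S t = {}" "DD S t = {}" unfolding EE_def DD_def hasp_def using True by simp_all
  then show ?thesis by simp
next
  case False
  define X' where "X' i = (if i \<in> S then X i else (\<lambda>_. (0::real,0::real)))" for i
  have ind: "indep_vars (\<lambda>_. MM) X' S"
    using indep_vars_subset[OF indepX assms(2)]
    by (rule indep_vars_cong[THEN iffD1, rotated -1]) (auto simp: X'_def)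
  have SI: "\<And>i. i \<in> S \<Longrightarrow> X i \<in> measurable M MM" using X_meas assms(2) by (meson subsetD)
  have rv: "random_variable MM (X' i)" for i
    by (cases "i \<in> S") (simp_all add: X'_def SI)
  have distr: "distr M (PiM S (\<lambda>_. MM)) (\<lambda>x. \<lambda>i\<in>S. X' i x) = PiM S (\<lambda>i. distr M MM (X' i))"
    using indep_vars_iff_distr_eq_PiM[OF False rv] ind by simp
  have r1: "(\<lambda>x. \<lambda>i\<in>S. X' i x) = (\<lambda>x. \<lambda>i\<in>S. X i x)"
    by (auto simp: X'_def restrict_def fun_eq_iff)
  have r2: "PiM S (\<lambda>i. distr M MM (X' i)) = PiM S (\<lambda>_. mu)"
  proof (rule PiM_cong[OF refl])
    fix i assume "i \<in> S"
    obtain k j where kj: "i = (k,j)" by (cases i)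
    have "(k,j) \<in> II" using kj \<open>i \<in> S\<close> assms(2) by (meson subsetD)
    then have "k \<ge> 1" "j \<ge> 1" by auto
    have "distr M MM (X (k,j)) = mu" unfolding mu_def by (rule identX) fact+
    with kj show "distr M MM (X' i) = mu" using \<open>i \<in> S\<close> by (simp add: X'_def)
  qed
  have meas: "(\<lambda>x. \<lambda>i\<in>S. X i x) \<in> measurable M (PiM S (\<lambda>_. MM))"
    using SI by (intro measurable_restrict) auto
  have "measure (PiM S (\<lambda>_. mu)) (DD S t) = measure (distr M (PiM S (\<lambda>_. MM)) (\<lambda>x. \<lambda>i\<in>S. X i x)) (DD S t)"
    using distr r1 r2 by simp
  also have "\<dots> = measure M ((\<lambda>x. \<lambda>i\<in>S. X i x) -` DD S t \<inter> space M)"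
    by (rule measure_distr[OF meas DD_sets[OF assms(1)]])
  also have "(\<lambda>x. \<lambda>i\<in>S. X i x) -` DD S t \<inter> space M = EE S t"
  proof -
    have e: "hasp S t (\<lambda>i\<in>S. X i x) = hasp S t (\<lambda>s. X s x)" for x
      by (rule hasp_cong) simp
    have sp: "(\<lambda>i\<in>S. X i x) \<in> space (PiM S (\<lambda>_. MM))" for x
      by (simp add: space_PiM space_pair_measure)
    show ?thesis unfolding DD_def EE_def
      by (intro set_eqI) (simp only: vimage_def mem_Collect_eq Int_iff e sp simp_thms, blast)
  qed
  finally show ?thesis by simp
qed

lemma DD_reindex:
  assumes "finite S" "finite T" "bij_betw g T S"
  shows "measure (PiM S (\<lambda>_. mu)) (DD S t) = measure (PiM T (\<lambda>_. mu)) (DD T t)"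
proof -
  have inj: "inj_on g T" and gTS: "g \<in> T \<rightarrow> S" using assms(3) by (auto simp: bij_betw_def)
  have d: "distr (PiM S (\<lambda>_. mu)) (PiM T (\<lambda>_. mu)) (\<lambda>w. \<lambda>n\<in>T. w (g n)) = PiM T (\<lambda>_. mu)"
    using distr_PiM_reindex[of S "\<lambda>_. mu" g T] prob_space_mu inj gTS by simp
  have smu: "sets mu = sets MM" by (simp add: mu_def)
  have sP: "sets (PiM T (\<lambda>_. mu)) = sets (PiM T (\<lambda>_. MM))" for T :: "(nat \<times> nat) set"
    by (intro sets_PiM_cong) (auto simp: smu)
  have spP: "space (PiM T (\<lambda>_. mu)) = space (PiM T (\<lambda>_. MM))" for T :: "(nat \<times> nat) set"
    by (simp add: space_PiM sets_eq_imp_space_eq[OF smu])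
  have meas: "(\<lambda>w. \<lambda>n\<in>T. w (g n)) \<in> measurable (PiM S (\<lambda>_. mu)) (PiM T (\<lambda>_. mu))"
    using gTS by (intro measurable_restrict measurable_component_singleton) auto
  have "measure (PiM T (\<lambda>_. mu)) (DD T t) = measure (distr (PiM S (\<lambda>_. mu)) (PiM T (\<lambda>_. mu)) (\<lambda>w. \<lambda>n\<in>T. w (g n))) (DD T t)"
    using d by simp
  also have "\<dots> = measure (PiM S (\<lambda>_. mu)) ((\<lambda>w. \<lambda>n\<in>T. w (g n)) -` DD T t \<inter> space (PiM S (\<lambda>_. mu)))"
    by (rule measure_distr[OF meas]) (use DD_sets[OF assms(2)] sP in auto)
  also have "(\<lambda>w. \<lambda>n\<in>T. w (g n)) -` DD T t \<inter> space (PiM S (\<lambda>_. mu)) = DD S t"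
  proof -
    have "hasp T t (\<lambda>n\<in>T. w (g n)) = hasp T t (\<lambda>n. w (g n))" for w
      by (rule hasp_cong) simp
    also have "\<dots> w = hasp S t w" for w by (rule hasp_reindex[OF assms(3)])
    finally have e: "hasp T t (\<lambda>n\<in>T. w (g n)) = hasp S t w" for w .
    have sp: "w \<in> space (PiM S (\<lambda>_. MM)) \<Longrightarrow> (\<lambda>n\<in>T. w (g n)) \<in> space (PiM T (\<lambda>_. MM))" for w
      by (simp add: space_PiM space_pair_measure)
    show ?thesis unfolding DD_def spP
      by (intro set_eqI) (simp only: vimage_def mem_Collect_eq Int_iff e simp_thms, use sp in blast)
  qed
  finally show ?thesis by simp
qed

definition "ppi n t = prob (EE ({1} \<times> {1..n}) t)"

lemma prob_EE_card: assumes "finite S" "S \<subseteq> II" shows "prob (EE S t) = ppi (card S) t"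
proof -
  have f: "finite ({1::nat} \<times> {1..card S})" by simp
  have "card ({1::nat} \<times> {1..card S}) = card S" by (simp add: card_cartesian_product)
  then obtain g where g: "bij_betw g ({1::nat} \<times> {1..card S}) S"
    using finite_same_card_bij[OF f assms(1)] by metis
  have sub: "{1::nat} \<times> {1..card S} \<subseteq> II" by auto
  show ?thesis unfolding ppi_def
    using EE_eq_DD[OF assms] EE_eq_DD[OF f sub] DD_reindex[OF assms(1) f g] by simp
qed

end

context iidarr
begin

lemma ppi_nonneg: "0 \<le> ppi n t" unfolding ppi_def by simp
lemma ppi_le1: "ppi n t \<le> 1" unfolding ppi_def by simp

lemma EE_mono_set: "S \<subseteq> T \<Longrightarrow> EE S t \<subseteq> EE T t"
  unfolding EE_def using hasp_mono_set by blast

lemma EE_mono_t: "t \<le> t' \<Longrightarrow> EE S t' \<subseteq> EE S t"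
  unfolding EE_def using hasp_mono_t by blast

lemma ppi_mono: assumes "n \<le> m" shows "ppi n t \<le> ppi m t"
proof -
  have "{1::nat} \<times> {1..n} \<subseteq> {1} \<times> {1..m}" using assms by auto
  then have "EE ({1} \<times> {1..n}) t \<subseteq> EE ({1} \<times> {1..m}) t" by (rule EE_mono_set)
  moreover have "EE ({1} \<times> {1..m}) t \<in> events" by (rule EE_sets) auto
  ultimately show ?thesis unfolding ppi_def by (rule finite_measure_mono)
qed

lemma ppi_anti: assumes "t \<le> t'" shows "ppi n t' \<le> ppi n t"
proof -
  have "EE ({1} \<times> {1..n}) t' \<subseteq> EE ({1} \<times> {1..n}) t" using assms by (rule EE_mono_t)
  moreover have "EE ({1} \<times> {1..n}) t \<in> events" by (rule EE_sets) auto
  ultimately show ?thesis unfolding ppi_def by (rule finite_measure_mono)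
qed

lemma ppi_card_le: assumes "finite S" "S \<subseteq> II" "card S \<le> m" shows "prob (EE S t) \<le> ppi m t"
  using prob_EE_card[OF assms(1,2)] ppi_mono[OF assms(3)] by simp

lemma ppi_split: "ppi n t \<le> 3 * ppi (n - n div 3) t"
proof -
  define d where "d = n div 3"
  define A where "A = {1::nat} \<times> {1..d}"
  define B where "B = {1::nat} \<times> {d+1..2*d}"
  define C where "C = {1::nat} \<times> {2*d+1..n}"
  have d3: "3 * d \<le> n" unfolding d_def by simp
  have U: "{1::nat} \<times> {1..n} = A \<union> B \<union> C" unfolding A_def B_def C_def using d3 by auto
  have cA: "card A = d" unfolding A_def by (simp add: card_cartesian_product)
  have cB: "card B = d" unfolding B_def by (simp add: card_cartesian_product)
  have cC: "card C = n - 2 * d" unfolding C_def by (simp add: card_cartesian_product)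
  have fin: "finite A" "finite B" "finite C" unfolding A_def B_def C_def by auto
  have sub: "A \<subseteq> II" "B \<subseteq> II" "C \<subseteq> II" unfolding A_def B_def C_def by auto
  have "EE (A \<union> B \<union> C) t \<subseteq> EE (A \<union> B) t \<union> EE (A \<union> C) t \<union> EE (B \<union> C) t"
    unfolding EE_def using hasp_split3 by blast
  moreover have ev: "EE (A \<union> B) t \<in> events" "EE (A \<union> C) t \<in> events" "EE (B \<union> C) t \<in> events"
    using fin sub by (auto intro!: EE_sets)
  ultimately have "ppi n t \<le> prob (EE (A \<union> B) t \<union> EE (A \<union> C) t \<union> EE (B \<union> C) t)"
    unfolding ppi_def U by (intro finite_measure_mono) auto
  also have "\<dots> \<le> prob (EE (A \<union> B) t \<union> EE (A \<union> C) t) + prob (EE (B \<union> C) t)"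
    using ev by (intro measure_Un_le sets.Un) auto
  also have "\<dots> \<le> prob (EE (A \<union> B) t) + prob (EE (A \<union> C) t) + prob (EE (B \<union> C) t)"
    using ev by (intro add_mono measure_Un_le order_refl) auto
  also have "\<dots> \<le> ppi (n - d) t + ppi (n - d) t + ppi (n - d) t"
  proof (intro add_mono)
    show "prob (EE (A \<union> B) t) \<le> ppi (n - d) t"
      using fin sub card_Un_le[of A B] cA cB d3 by (intro ppi_card_le) auto
    show "prob (EE (A \<union> C) t) \<le> ppi (n - d) t"
      using fin sub card_Un_le[of A C] cA cC d3 by (intro ppi_card_le) auto
    show "prob (EE (B \<union> C) t) \<le> ppi (n - d) t"
      using fin sub card_Un_le[of B C] cB cC d3 by (intro ppi_card_le) auto
  qed
  finally show ?thesis unfolding d_def by simp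
qed

lemma ppi_iter:
  "\<And>n. (real n - 2) * (2/3)^L \<le> real m - 2 \<Longrightarrow> ppi n t \<le> 3^L * ppi m t"
proof (induction L)
  case 0
  then have "n \<le> m" by simp
  then show ?case by (simp add: ppi_mono)
next
  case (Suc L)
  define f where "f = n - n div 3"
  have "3 * (n div 3) + 2 \<ge> n" by linarith
  then have r: "real (n div 3) * 3 \<ge> real n - 2" by linarith
  have rf: "real f = real n - real (n div 3)" unfolding f_def by (simp add: of_nat_diff)
  have "(real f - 2) * (2/3)^L \<le> ((real n - 2) * (2/3)) * (2/3)^L"
    by (intro mult_right_mono) (use r rf in auto)
  also have "\<dots> = (real n - 2) * (2/3)^Suc L" by simp
  also have "\<dots> \<le> real m - 2" by fact
  finally have "ppi f t \<le> 3^L * ppi m t" by (rule Suc.IH)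
  moreover have "ppi n t \<le> 3 * ppi f t" unfolding f_def by (rule ppi_split)
  ultimately show ?case by simp
qed

lemma ppi_red:
  assumes "lam > 0"
  shows "\<exists>K>0. \<forall>n m t. 4 \<le> m \<longrightarrow> real n \<le> lam * real m \<longrightarrow> ppi n t \<le> K * ppi m t"
proof -
  obtain L where L: "(2/3::real)^L < 1 / (2 * lam)"
    using real_arch_pow_inv[of "1 / (2*lam)" "2/3::real"] assms by auto
  have L': "(2/3::real)^L * lam \<le> 1/2" using L assms by (simp add: field_simps)
  show ?thesis
  proof (intro exI[of _ "3^L"] conjI allI impI)
    fix n m :: nat and t assume m: "4 \<le> m" and n: "real n \<le> lam * real m"
    have "(real n - 2) * (2/3)^L \<le> real n * (2/3)^L" by (simp add: mult_right_mono)
    also have "\<dots> \<le> (lam * real m) * (2/3)^L" by (intro mult_right_mono n) simp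
    also have "\<dots> = ((2/3)^L * lam) * real m" by simp
    also have "\<dots> \<le> (1/2) * real m" by (intro mult_right_mono L') simp
    also have "\<dots> \<le> real m - 2" using m by simp
    finally show "ppi n t \<le> 3^L * ppi m t" by (rule ppi_iter)
  qed simp
qed

lemma prob_row: assumes "k \<ge> 1" shows "prob (EE ({k} \<times> {1..n}) t) = ppi n t"
proof -
  have "prob (EE ({k} \<times> {1..n}) t) = ppi (card ({k} \<times> {1..n})) t"
    using assms by (intro prob_EE_card) auto
  then show ?thesis by (simp add: card_cartesian_product)
qed

end

lemma prod_one_minus_bound:
  fixes p :: "'i \<Rightarrow> real"
  assumes "finite J" "\<And>k. k \<in> J \<Longrightarrow> 0 \<le> p k" "\<And>k. k \<in> J \<Longrightarrow> p k \<le> 1"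
  shows "(\<Prod>k\<in>J. 1 - p k) * (1 + (\<Sum>k\<in>J. p k)) \<le> 1 \<and> 0 \<le> (\<Prod>k\<in>J. 1 - p k) \<and> (\<Prod>k\<in>J. 1 - p k) \<le> 1"
  using assms
proof (induction J rule: finite_induct)
  case empty
  then show ?case by simp
next
  case (insert j J)
  define P where "P = (\<Prod>k\<in>J. 1 - p k)"
  define s where "s = (\<Sum>k\<in>J. p k)"
  have IH: "P * (1 + s) \<le> 1" "0 \<le> P" "P \<le> 1" using insert unfolding P_def s_def by auto
  have pj: "0 \<le> p j" "p j \<le> 1" using insert by auto
  have s0: "0 \<le> s" unfolding s_def using insert by (auto intro!: sum_nonneg)
  have e1: "(\<Prod>k\<in>insert j J. 1 - p k) = (1 - p j) * P" unfolding P_def using insert by simp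
  have e2: "(\<Sum>k\<in>insert j J. p k) = p j + s" unfolding s_def using insert by simp
  have "(1 - p j) * P * (1 + (p j + s)) = (1 - p j) * (P * (1 + s)) + (1 - p j) * p j * P"
    by (simp add: algebra_simps)
  also have "\<dots> \<le> (1 - p j) * 1 + (1 - p j) * p j * 1"
    using IH pj by (intro add_mono mult_left_mono) (auto intro: mult_nonneg_nonneg)
  also have "\<dots> \<le> 1" using pj by (simp add: algebra_simps mult_nonneg_nonneg)
  finally have "(1 - p j) * P * (1 + (p j + s)) \<le> 1" .
  moreover have "0 \<le> (1 - p j) * P" using IH pj by simp
  moreover have "(1 - p j) * P \<le> 1" using IH pj by (simp add: mult_le_one)
  ultimately show ?case unfolding e1 e2 by simp
qed

context iidarr
begin

lemma rows_union:
  assumes J: "finite J" "J \<subseteq> {1..}"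
  shows "prob (\<Union>k\<in>J. EE ({k} \<times> {1..n k}) t) = 1 - (\<Prod>k\<in>J. 1 - ppi (n k) t)"
proof (cases "J = {}")
  case True then show ?thesis by simp
next
  case False
  define K where "K k = {k} \<times> {1..n k}" for k
  have KI: "K k \<subseteq> II" if "k \<in> J" for k using that J unfolding K_def by auto
  have disj: "disjoint_family_on K J" unfolding K_def disjoint_family_on_def by auto
  have finK: "finite (K k)" for k unfolding K_def by simp
  define Z where "Z k \<omega> = restrict (\<lambda>i. X i \<omega>) (K k)" for k \<omega>
  have ind: "indep_vars (\<lambda>k. PiM (K k) (\<lambda>_. MM)) Z J"
    unfolding Z_def by (rule indep_vars_restrict[OF indepX KI disj])
  define A where "A k = space (PiM (K k) (\<lambda>_. MM)) - DD (K k) t" for k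
  have Asets: "A k \<in> sets (PiM (K k) (\<lambda>_. MM))" for k
    unfolding A_def using DD_sets[OF finK] by auto
  have pre: "Z k -` A k \<inter> space M = space M - EE (K k) t" for k
  proof -
    have e: "hasp (K k) t (Z k x) = hasp (K k) t (\<lambda>s. X s x)" for x
      unfolding Z_def by (rule hasp_cong) simp
    have sp: "Z k x \<in> space (PiM (K k) (\<lambda>_. MM))" for x
      unfolding Z_def by (simp add: space_PiM space_pair_measure)
    show ?thesis unfolding A_def DD_def EE_def
      by (intro set_eqI) (simp only: vimage_def mem_Collect_eq Int_iff Diff_iff e sp simp_thms, blast)
  qed
  have ev: "EE (K k) t \<in> events" if "k \<in> J" for k using KI[OF that] finK by (intro EE_sets)
  have "prob (\<Inter>k\<in>J. Z k -` A k \<inter> space M) = (\<Prod>k\<in>J. prob (Z k -` A k \<inter> space M))"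
    by (rule indep_varsD[OF ind False J(1) order_refl Asets])
  also have "\<dots> = (\<Prod>k\<in>J. 1 - ppi (n k) t)"
  proof (intro prod.cong refl)
    fix k assume k: "k \<in> J"
    then have "k \<ge> 1" using J by auto
    have "prob (Z k -` A k \<inter> space M) = 1 - prob (EE (K k) t)"
      unfolding pre using ev[OF k] by (rule prob_compl)
    then show "prob (Z k -` A k \<inter> space M) = 1 - ppi (n k) t"
      unfolding K_def using prob_row[OF \<open>k \<ge> 1\<close>] by simp
  qed
  also have "(\<Inter>k\<in>J. Z k -` A k \<inter> space M) = space M - (\<Union>k\<in>J. EE (K k) t)"
    unfolding pre using False by auto
  finally have "prob (space M - (\<Union>k\<in>J. EE (K k) t)) = (\<Prod>k\<in>J. 1 - ppi (n k) t)" .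
  moreover have "(\<Union>k\<in>J. EE (K k) t) \<in> events" using ev J(1) by auto
  ultimately show ?thesis unfolding K_def using prob_compl by auto
qed

lemma rows_union_le:
  assumes J: "finite J" "J \<subseteq> {1..}"
  shows "prob (\<Union>k\<in>J. EE ({k} \<times> {1..n k}) t) \<le> (\<Sum>k\<in>J. ppi (n k) t)"
proof -
  have "prob (\<Union>k\<in>J. EE ({k} \<times> {1..n k}) t) \<le> (\<Sum>k\<in>J. prob (EE ({k} \<times> {1..n k}) t))"
    using J by (intro finite_measure_subadditive_finite) (auto intro!: EE_sets)
  also have "\<dots> = (\<Sum>k\<in>J. ppi (n k) t)"
    using J by (intro sum.cong refl prob_row) auto
  finally show ?thesis .
qed

lemma rows_union_ge:
  assumes J: "finite J" "J \<subseteq> {1..}"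
    and small: "prob (\<Union>k\<in>J. EE ({k} \<times> {1..n k}) t) \<le> 1/2"
  shows "(\<Sum>k\<in>J. ppi (n k) t) \<le> 2 * prob (\<Union>k\<in>J. EE ({k} \<times> {1..n k}) t)"
proof -
  define P where "P = prob (\<Union>k\<in>J. EE ({k} \<times> {1..n k}) t)"
  define s where "s = (\<Sum>k\<in>J. ppi (n k) t)"
  have b: "(\<Prod>k\<in>J. 1 - ppi (n k) t) * (1 + s) \<le> 1"
    unfolding s_def using prod_one_minus_bound[OF J(1), of "\<lambda>k. ppi (n k) t"] ppi_nonneg ppi_le1 by auto
  have eq: "(\<Prod>k\<in>J. 1 - ppi (n k) t) = 1 - P" unfolding P_def using rows_union[OF J] by simp
  have "P \<le> 1/2" using small unfolding P_def .
  have s0: "0 \<le> s" unfolding s_def by (intro sum_nonneg ppi_nonneg)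
  have "(1 - P) * (1 + s) \<le> 1" using b eq by simp
  then have "(1 - P) * s \<le> P" by (simp add: algebra_simps)
  moreover have "s / 2 \<le> (1 - P) * s" using \<open>P \<le> 1/2\<close> s0 by (simp add: mult_right_mono[of "1/2" "1-P" s, simplified])
  ultimately show ?thesis unfolding P_def s_def by simp
qed

end

lemma fl_le: "0 \<le> y \<Longrightarrow> real (nat \<lfloor>y\<rfloor>) \<le> y"
  by (rule of_nat_floor)

lemma fl_ge: "0 \<le> y \<Longrightarrow> y - 1 < real (nat \<lfloor>y\<rfloor>)"
  using real_of_int_floor_gt_diff_one[of y] by simp

lemma fl_iff: "1 \<le> i \<Longrightarrow> (real i \<le> y \<longleftrightarrow> i \<le> nat \<lfloor>y\<rfloor>)"
proof
  assume "real i \<le> y" then show "i \<le> nat \<lfloor>y\<rfloor>" by (rule le_nat_floor)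
next
  assume i: "1 \<le> i" "i \<le> nat \<lfloor>y\<rfloor>"
  then have "1 \<le> \<lfloor>y\<rfloor>" by linarith
  then have "real (nat \<lfloor>y\<rfloor>) = real_of_int \<lfloor>y\<rfloor>" by simp
  also have "\<dots> \<le> y" by simp
  finally show "real i \<le> y" using i(2) by (meson of_nat_le_iff order_trans)
qed

lemma fl_half: assumes "2 \<le> y" shows "y / 2 \<le> real (nat \<lfloor>y\<rfloor>)"
proof -
  have "y - 1 < real (nat \<lfloor>y\<rfloor>)" using fl_ge[of y] assms by simp
  then show ?thesis using assms by linarith
qed

lemma summable_div_index:
  fixes f :: "nat \<Rightarrow> real"
  assumes "summable f" "\<And>n. 0 \<le> f n" "D > 0"
  shows "summable (\<lambda>n. f (n div D))"
proof (rule summableI_nonneg_bounded)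
  fix N
  have "(\<Sum>n<N. f (n div D)) \<le> (\<Sum>n<N * D. f (n div D))"
    using assms by (intro sum_mono2) auto
  also have "\<dots> = (\<Sum>m<N. \<Sum>n\<in>{m*D..<m*D+D}. f (n div D))"
    by (rule sum.nat_group[symmetric])
  also have "\<dots> = (\<Sum>m<N. real D * f m)"
  proof (intro sum.cong refl)
    fix m
    have "\<And>n. n \<in> {m*D..<m*D+D} \<Longrightarrow> n div D = m"
      using assms(3) by (auto simp: div_nat_eqI mult.commute)
    then show "(\<Sum>n\<in>{m*D..<m*D+D}. f (n div D)) = real D * f m" by simp
  qed
  also have "\<dots> = real D * (\<Sum>m<N. f m)" by (simp add: sum_distrib_left)
  also have "\<dots> \<le> real D * suminf f"
    using assms by (intro mult_left_mono sum_le_suminf) auto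
  finally show "(\<Sum>n<N. f (n div D)) \<le> real D * suminf f" .
qed (use assms in auto)

context iidarr
begin

lemma partA_21:
  assumes c: "c > 0" and sg: "summable (\<lambda>n. ppi (nat \<lfloor>c * real n\<rfloor>) (a n))"
  shows "summable (\<lambda>n. ppi n (a n))"
proof -
  obtain K where K: "K > 0" "\<And>n m t. 4 \<le> m \<Longrightarrow> real n \<le> (2/c) * real m \<Longrightarrow> ppi n t \<le> K * ppi m t"
    using ppi_red[of "2/c"] c by auto
  obtain N0 :: nat where N0: "8 / c \<le> real N0" using real_arch_simple by blast
  show ?thesis
  proof (rule summable_comparison_test'[OF summable_mult[OF sg, of K]])
    fix n assume n: "N0 \<le> n"
    define m where "m = nat \<lfloor>c * real n\<rfloor>"
    have "8 / c \<le> real n" using N0 n by (meson of_nat_le_iff order_trans)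
    then have cn: "8 \<le> c * real n" using c by (simp add: field_simps)
    have "c * real n / 2 \<le> real m" unfolding m_def using cn by (intro fl_half) simp
    then have m4: "4 \<le> m" and mb: "real n \<le> (2/c) * real m" using cn c by (auto simp: field_simps)
    show "norm (ppi n (a n)) \<le> K * ppi m (a n)"
      using K(2)[OF m4 mb] ppi_nonneg by simp
  qed
qed

lemma amono_le:
  assumes amono: "\<And>n. n \<ge> 1 \<Longrightarrow> a n \<le> a (Suc n)" and "1 \<le> i" "i \<le> j"
  shows "a i \<le> (a j :: real)"
  using assms(3) 
proof (induction j rule: dec_induct)
  case (step j)
  then show ?case using amono[of j] assms(2) by simp
qed simp

lemma partA_12:
  fixes a :: "nat \<Rightarrow> real"
  assumes apos: "\<And>n. n \<ge> 1 \<Longrightarrow> a n > 0"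
    and amono: "\<And>n. n \<ge> 1 \<Longrightarrow> a n \<le> a (Suc n)"
    and aliminf: "liminf (\<lambda>n. ereal (a (2 * n) / a n)) > 1"
    and c: "c > 0" and eps: "\<epsilon> > 0"
    and s1: "summable (\<lambda>n. ppi n (a n))"
  shows "summable (\<lambda>n. ppi (nat \<lfloor>c * real n\<rfloor>) (\<epsilon> * a n))"
proof -
  obtain z where z: "1 < ereal z" "ereal z < liminf (\<lambda>n. ereal (a (2 * n) / a n))"
    using ereal_dense2[OF aliminf] by blast
  have "eventually (\<lambda>n. ereal z < ereal (a (2 * n) / a n)) sequentially"
    by (rule less_LiminfD[OF z(2)])
  then obtain N1 where N1: "\<And>n. n \<ge> N1 \<Longrightarrow> z < a (2 * n) / a n"
    by (auto simp: eventually_sequentially)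
  define N0 where "N0 = max N1 1"
  have z1: "z > 1" using z(1) by simp
  have doub: "a (2 * n) \<ge> z * a n" if "n \<ge> N0" for n
  proof -
    have "z < a (2 * n) / a n" using N1 that unfolding N0_def by simp
    moreover have "a n > 0" using apos that unfolding N0_def by simp
    ultimately show ?thesis by (simp add: field_simps)
  qed
  have powk: "a (2^k * n) \<ge> z^k * a n" if "n \<ge> N0" for k n
  proof (induction k)
    case 0 then show ?case by simp
  next
    case (Suc k)
    have "n \<le> 2^k * n" by simp
    then have "2^k * n \<ge> N0" using that by linarith
    then have "a (2 * (2^k * n)) \<ge> z * a (2^k * n)" by (rule doub)
    moreover have "z * a (2^k * n) \<ge> z * (z^k * a n)" using Suc z1 by (intro mult_left_mono) auto
    ultimately show ?case by (simp add: mult.assoc)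
  qed
  obtain k where k: "1 / \<epsilon> < z^k" using real_arch_pow[OF z1] by blast
  define D :: nat where "D = 2^k"
  have D0: "D > 0" unfolding D_def by simp
  obtain K where K: "K > 0" "\<And>n m t. 4 \<le> m \<Longrightarrow> real n \<le> (2 * c * real D) * real m \<Longrightarrow> ppi n t \<le> K * ppi m t"
    using ppi_red[of "2 * c * real D"] c D0 by auto
  have sD: "summable (\<lambda>n. K * ppi (n div D) (a (n div D)))"
    by (intro summable_mult summable_div_index[OF s1] ppi_nonneg D0)
  show ?thesis
  proof (rule summable_comparison_test'[OF sD])
    fix n assume n: "D * max N0 4 \<le> n"
    define m where "m = n div D"
    have "(D * max N0 4) div D \<le> n div D" by (rule div_le_mono[OF n])
    then have mge: "max N0 4 \<le> m" unfolding m_def using D0 by simp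
    then have m1: "m \<ge> 1" "m \<ge> N0" "m \<ge> 4" by auto
    have "D * m \<le> n" unfolding m_def by simp
    then have "a (D * m) \<le> a n" using m1 D0
      by (intro amono_le[of a, OF amono]) (auto simp: Suc_le_eq)
    moreover have "z^k * a m \<le> a (D * m)" unfolding D_def using powk m1 by simp
    moreover have "a m \<le> \<epsilon> * (z^k * a m)"
    proof -
      have "1 \<le> \<epsilon> * z^k" using k eps by (simp add: field_simps)
      then have "1 * a m \<le> (\<epsilon> * z^k) * a m" using apos[of m] m1 by (intro mult_right_mono) auto
      then show ?thesis by (simp add: mult.assoc)
    qed
    ultimately have am: "a m \<le> \<epsilon> * a n"
    proof -
      assume h: "a (D * m) \<le> a n" "z^k * a m \<le> a (D * m)" "a m \<le> \<epsilon> * (z^k * a m)"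
      have "\<epsilon> * (z^k * a m) \<le> \<epsilon> * a n" using h(1,2) eps by (intro mult_left_mono) auto
      then show ?thesis using h(3) by linarith
    qed
    have "real n < real D * (real m + 1)"
    proof -
      have "n mod D < D" using D0 by simp
      moreover have "n = D * m + n mod D" unfolding m_def by simp
      ultimately have "n < D * m + D" by linarith
      then have "real n < real (D * m + D)" by (simp only: of_nat_less_iff)
      then show ?thesis by (simp add: algebra_simps)
    qed
    then have "c * real n \<le> c * (real D * (real m + 1))" using c by simp
    also have "\<dots> \<le> (2 * c * real D) * real m" using m1 c D0 by (simp add: algebra_simps)
    finally have cnb: "c * real n \<le> (2 * c * real D) * real m" .
    have "real (nat \<lfloor>c * real n\<rfloor>) \<le> c * real n" using c by (intro fl_le) simp
    then have "real (nat \<lfloor>c * real n\<rfloor>) \<le> (2 * c * real D) * real m" using cnb by linarith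
    then have "ppi (nat \<lfloor>c * real n\<rfloor>) (a m) \<le> K * ppi m (a m)"
      using K(2) m1 by blast
    moreover have "ppi (nat \<lfloor>c * real n\<rfloor>) (\<epsilon> * a n) \<le> ppi (nat \<lfloor>c * real n\<rfloor>) (a m)"
      using am by (rule ppi_anti)
    ultimately show "norm (ppi (nat \<lfloor>c * real n\<rfloor>) (\<epsilon> * a n)) \<le> K * ppi (n div D) (a (n div D))"
      using ppi_nonneg unfolding m_def by simp
  qed
qed

end

lemma block_sum_eq:
  fixes f :: "nat \<Rightarrow> real"
  assumes mono: "\<And>n. N n \<le> N (Suc n)"
  shows "(\<Sum>n<M. \<Sum>k\<in>{N n<..N (Suc n)}. f k) = (\<Sum>k\<in>{N 0<..N M}. f k)"
proof (induction M)
  case 0 then show ?case by simp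
next
  case (Suc M)
  have m: "N 0 \<le> N M" using mono by (induction M) (auto intro: order_trans)
  have "{N 0<..N (Suc M)} = {N 0<..N M} \<union> {N M<..N (Suc M)}"
    using m mono[of M] by auto
  moreover have "{N 0<..N M} \<inter> {N M<..N (Suc M)} = {}" by auto
  ultimately have "(\<Sum>k\<in>{N 0<..N (Suc M)}. f k) = (\<Sum>k\<in>{N 0<..N M}. f k) + (\<Sum>k\<in>{N M<..N (Suc M)}. f k)"
    by (simp add: sum.union_disjoint)
  then show ?case using Suc by simp
qed

lemma block_summable:
  fixes f :: "nat \<Rightarrow> real"
  assumes mono: "\<And>n. N n \<le> N (Suc n)" and f0: "\<And>n. 0 \<le> f n" and sf: "summable f"
  shows "summable (\<lambda>n. \<Sum>k\<in>{N n<..N (Suc n)}. f k)"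
proof (rule summableI_nonneg_bounded)
  fix M
  have "(\<Sum>n<M. \<Sum>k\<in>{N n<..N (Suc n)}. f k) = (\<Sum>k\<in>{N 0<..N M}. f k)"
    by (rule block_sum_eq[of N, OF mono])
  also have "\<dots> \<le> suminf f" using sf f0 by (intro sum_le_suminf) auto
  finally show "(\<Sum>n<M. \<Sum>k\<in>{N n<..N (Suc n)}. f k) \<le> suminf f" .
qed (use f0 in \<open>auto intro: sum_nonneg\<close>)

lemma block_summable_rev:
  fixes f :: "nat \<Rightarrow> real"
  assumes mono: "\<And>n. N n \<le> N (Suc n)" and unb: "\<And>L. \<exists>M. L \<le> N M"
    and f0: "\<And>n. 0 \<le> f n" and sB: "summable (\<lambda>n. \<Sum>k\<in>{N n<..N (Suc n)}. f k)"
  shows "summable f"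
proof (rule summableI_nonneg_bounded)
  fix L
  obtain M where M: "L \<le> N M" using unb by blast
  have "{..<L} \<subseteq> {..N 0} \<union> {N 0<..N M}" using M by auto
  then have "(\<Sum>k<L. f k) \<le> (\<Sum>k\<in>{..N 0} \<union> {N 0<..N M}. f k)"
    using f0 by (intro sum_mono2) auto
  also have "\<dots> = (\<Sum>k\<in>{..N 0}. f k) + (\<Sum>k\<in>{N 0<..N M}. f k)"
    by (rule sum.union_disjoint) auto
  also have "(\<Sum>k\<in>{N 0<..N M}. f k) = (\<Sum>n<M. \<Sum>k\<in>{N n<..N (Suc n)}. f k)"
    by (rule block_sum_eq[of N, OF mono, symmetric])
  also have "\<dots> \<le> suminf (\<lambda>n. \<Sum>k\<in>{N n<..N (Suc n)}. f k)"
    using sB f0 by (intro sum_le_suminf) (auto intro: sum_nonneg)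
  finally show "(\<Sum>k<L. f k) \<le> (\<Sum>k\<in>{..N 0}. f k) + suminf (\<lambda>n. \<Sum>k\<in>{N n<..N (Suc n)}. f k)"
    by simp
qed (use f0 in auto)

lemma qpow_ev:
  fixes q :: real
  assumes "q > 1"
  shows "\<exists>n0. \<forall>n\<ge>n0. B \<le> q ^ n"
proof -
  obtain n0 where "B < q ^ n0" using real_arch_pow[OF assms] by blast
  moreover have "q ^ n0 \<le> q ^ n" if "n \<ge> n0" for n using assms that by (intro power_increasing) auto
  ultimately show ?thesis by (meson less_imp_le order_trans)
qed

lemma NN_props:
  fixes q :: real
  assumes q: "q > 1"
  defines "N \<equiv> \<lambda>n. nat \<lfloor>q ^ Suc n\<rfloor>"
  shows "N n \<le> N (Suc n)" "1 \<le> N n" "real (N n) \<le> q ^ Suc n" "q ^ Suc n - 1 < real (N n)"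
    "\<And>L. \<exists>M. L \<le> N M"
proof -
  have qp: "0 < q ^ k" for k using q by simp
  have "q ^ Suc n \<le> q ^ Suc (Suc n)" using q by (intro power_increasing) auto
  then show "N n \<le> N (Suc n)" unfolding N_def by (intro nat_mono floor_mono)
  have "1 < q ^ Suc n" using q by (intro one_less_power) auto
  then show "1 \<le> N n" unfolding N_def by (simp add: le_nat_iff)
  show "real (N n) \<le> q ^ Suc n" unfolding N_def by (rule fl_le) (rule less_imp_le[OF qp])
  show "q ^ Suc n - 1 < real (N n)" unfolding N_def by (rule fl_ge) (rule less_imp_le[OF qp])
  fix L
  obtain M where M: "real L + 1 < q ^ M" using real_arch_pow[OF q] by blast
  have "q ^ M \<le> q ^ Suc M" using q by (intro power_increasing) auto
  moreover have "q ^ Suc M - 1 < real (N M)" unfolding N_def by (rule fl_ge) (rule less_imp_le[OF qp])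
  ultimately have "real L < real (N M)" using M by linarith
  then show "\<exists>M. L \<le> N M" by (intro exI[of _ M]) simp
qed

lemma fl_mono: "0 \<le> c \<Longrightarrow> m \<le> m' \<Longrightarrow> nat \<lfloor>c * real m\<rfloor> \<le> nat \<lfloor>c * real m'\<rfloor>"
  by (intro nat_mono floor_mono mult_left_mono) auto

context iidarr
begin

lemma partB_23:
  fixes a :: "nat \<Rightarrow> real" and c q \<epsilon> :: real
  assumes amono: "\<And>n. n \<ge> 1 \<Longrightarrow> a n \<le> a (Suc n)"
    and c: "c > 0" and q: "q > 1" and eps: "\<epsilon> > 0"
    and sg: "summable (\<lambda>k. ppi (nat \<lfloor>c * real k\<rfloor>) (\<epsilon> * a k))"
  shows "summable (\<lambda>n. prob (\<Union>m\<in>{1..nat \<lfloor>q ^ Suc n\<rfloor>}. EE ({m} \<times> {1..nat \<lfloor>c * real m\<rfloor>}) (\<epsilon> * a (nat \<lfloor>q ^ Suc n\<rfloor>))))"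
proof -
  define N where "N n = nat \<lfloor>q ^ Suc n\<rfloor>" for n
  define t where "t n = \<epsilon> * a (N n)" for n
  define P where "P n = ppi (nat \<lfloor>c * real (N n)\<rfloor>) (t n)" for n
  define g where "g k = ppi (nat \<lfloor>c * real k\<rfloor>) (\<epsilon> * a k)" for k
  define B where "B n = (\<Sum>k\<in>{N n<..N (Suc n)}. g k)" for n
  define T where "T n = prob (\<Union>m\<in>{1..N n}. EE ({m} \<times> {1..nat \<lfloor>c * real m\<rfloor>}) (t n))" for n
  have Nmono: "N n \<le> N (Suc n)" for n unfolding N_def using NN_props[OF q] by auto
  have N1: "1 \<le> N n" for n unfolding N_def using NN_props[OF q] by auto
  have Nup: "real (N n) \<le> q ^ Suc n" for n unfolding N_def using NN_props[OF q] by auto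
  have Nlo: "q ^ Suc n - 1 < real (N n)" for n unfolding N_def using NN_props[OF q] by auto
  have g0: "0 \<le> g k" for k unfolding g_def by (rule ppi_nonneg)
  have P0: "0 \<le> P n" for n unfolding P_def by (rule ppi_nonneg)
  have T_le: "T n \<le> real (N n) * P n" for n
  proof -
    have "T n \<le> (\<Sum>m\<in>{1..N n}. ppi (nat \<lfloor>c * real m\<rfloor>) (t n))"
      unfolding T_def by (rule rows_union_le) auto
    also have "\<dots> \<le> real (card {1..N n}) * P n"
      unfolding P_def using c by (intro sum_bounded_above ppi_mono fl_mono) auto
    finally show ?thesis by simp
  qed
  obtain K where K: "K > 0" "\<And>n m t. 4 \<le> m \<Longrightarrow> real n \<le> (2 * q) * real m \<Longrightarrow> ppi n t \<le> K * ppi m t"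
    using ppi_red[of "2 * q"] q by auto
  obtain n0 where n0: "\<And>n. n \<ge> n0 \<Longrightarrow> max (8 / c) (2 / (q - 1)) \<le> q ^ n"
    using qpow_ev[OF q] by blast
  have main: "real (N (Suc n)) * P (Suc n) \<le> (2 * q / (q - 1) * K) * B n" if n: "n \<ge> n0" for n
  proof -
    define Q where "Q = q ^ Suc n"
    have "q ^ n \<le> Q" unfolding Q_def using q by (intro power_increasing) auto
    then have Q8: "8 / c \<le> Q" and Q2: "2 / (q - 1) \<le> Q" using n0[OF n] by auto
    have cQ: "8 \<le> c * Q" using Q8 c by (simp add: field_simps)
    have qQ: "2 \<le> (q - 1) * Q" using Q2 q by (simp add: field_simps)
    have Q0: "0 < Q" unfolding Q_def using q by simp
    have NS: "real (N (Suc n)) \<le> q * Q" using Nup[of "Suc n"] unfolding Q_def by simp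
    have NSlo: "q * Q - 1 < real (N (Suc n))" using Nlo[of "Suc n"] unfolding Q_def by simp
    have Nn: "real (N n) \<le> Q" using Nup[of n] unfolding Q_def by simp
    have each: "P (Suc n) \<le> K * g k" if k: "k \<in> {N n<..N (Suc n)}" for k
    proof -
      have kN: "N n + 1 \<le> k" "k \<le> N (Suc n)" using k by auto
      have "Q - 1 < real (N n)" using Nlo[of n] unfolding Q_def by simp
      then have kQ: "Q \<le> real k" using kN(1) by (metis of_nat_1 of_nat_add of_nat_le_iff less_le_trans not_less add_le_cancel_right diff_less_eq order.strict_implies_order)
      have ck: "c * Q \<le> c * real k" using kQ c by simp
      have flk: "c * real k / 2 \<le> real (nat \<lfloor>c * real k\<rfloor>)" using ck cQ by (intro fl_half) linarith
      have m4: "4 \<le> nat \<lfloor>c * real k\<rfloor>" using flk ck cQ by linarith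
      have "real (nat \<lfloor>c * real (N (Suc n))\<rfloor>) \<le> c * real (N (Suc n))" using c by (intro fl_le) simp
      also have "\<dots> \<le> c * (q * Q)" using NS c by simp
      also have "\<dots> = (2 * q) * (c * Q / 2)" by simp
      also have "\<dots> \<le> (2 * q) * real (nat \<lfloor>c * real k\<rfloor>)"
        using flk ck q by (intro mult_left_mono) auto
      finally have "P (Suc n) \<le> K * ppi (nat \<lfloor>c * real k\<rfloor>) (t (Suc n))"
        unfolding P_def using K(2) m4 by blast
      also have "ppi (nat \<lfloor>c * real k\<rfloor>) (t (Suc n)) \<le> g k"
      proof -
        have "1 \<le> k" using kN by simp
        then have "a k \<le> a (N (Suc n))" using kN by (intro amono_le[of a, OF amono])
        then have "\<epsilon> * a k \<le> t (Suc n)" unfolding t_def using eps by simp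
        then show ?thesis unfolding g_def by (rule ppi_anti)
      qed
      finally show ?thesis using K(1) by simp
    qed
    have "real (card {N n<..N (Suc n)}) * P (Suc n) \<le> (\<Sum>k\<in>{N n<..N (Suc n)}. K * g k)"
      using each by (rule sum_bounded_below)
    also have "\<dots> = K * B n" unfolding B_def by (simp add: sum_distrib_left)
    finally have cardP: "real (N (Suc n) - N n) * P (Suc n) \<le> K * B n" by simp
    have "real (N (Suc n) - N n) = real (N (Suc n)) - real (N n)" using Nmono[of n] by (simp add: of_nat_diff)
    moreover have "(q - 1) * Q = q * Q - Q" by (simp add: algebra_simps)
    ultimately have cardlo: "(q - 1) * Q / 2 \<le> real (N (Suc n) - N n)" using NSlo Nn qQ by linarith
    have "(2 * q / (q - 1)) * ((q - 1) * Q / 2) = q * Q" using q by (simp add: field_simps)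
    then have "real (N (Suc n)) \<le> (2 * q / (q - 1)) * ((q - 1) * Q / 2)" using NS by simp
    also have "\<dots> \<le> (2 * q / (q - 1)) * real (N (Suc n) - N n)"
      using cardlo q by (intro mult_left_mono) auto
    finally have "real (N (Suc n)) * P (Suc n) \<le> (2 * q / (q - 1)) * real (N (Suc n) - N n) * P (Suc n)"
      using P0 by (intro mult_right_mono) auto
    also have "\<dots> = (2 * q / (q - 1)) * (real (N (Suc n) - N n) * P (Suc n))" by simp
    also have "\<dots> \<le> (2 * q / (q - 1)) * (K * B n)" using cardP q by (intro mult_left_mono) auto
    finally show ?thesis by simp
  qed
  have sB: "summable B" unfolding B_def using sg
    by (intro block_summable[of N g, OF Nmono g0]) (simp add: g_def[abs_def])
  have "summable (\<lambda>n. T (Suc n))"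
  proof (rule summable_comparison_test'[OF summable_mult[OF sB, of "2 * q / (q - 1) * K"]])
    fix n assume "n0 \<le> n"
    have "0 \<le> T (Suc n)" unfolding T_def by simp
    then show "norm (T (Suc n)) \<le> (2 * q / (q - 1) * K) * B n"
      using T_le[of "Suc n"] main[OF \<open>n0 \<le> n\<close>] by simp
  qed
  then have "summable T" by (simp add: summable_Suc_iff)
  then show ?thesis unfolding T_def t_def N_def .
qed

end

context iidarr
begin

lemma partB_32:
  fixes a :: "nat \<Rightarrow> real" and c q \<epsilon> :: real
  assumes amono: "\<And>n. n \<ge> 1 \<Longrightarrow> a n \<le> a (Suc n)"
    and c: "c > 0" and q: "q > 1" and eps: "\<epsilon> > 0"
    and sT: "summable (\<lambda>n. prob (\<Union>m\<in>{1..nat \<lfloor>q ^ Suc n\<rfloor>}. EE ({m} \<times> {1..nat \<lfloor>c * real m\<rfloor>}) (\<epsilon> * a (nat \<lfloor>q ^ Suc n\<rfloor>))))"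
  shows "summable (\<lambda>k. ppi (nat \<lfloor>c * real k\<rfloor>) (\<epsilon> * a k))"
proof -
  define N where "N n = nat \<lfloor>q ^ Suc n\<rfloor>" for n
  define t where "t n = \<epsilon> * a (N n)" for n
  define P where "P n = ppi (nat \<lfloor>c * real (N (Suc n))\<rfloor>) (t n)" for n
  define g where "g k = ppi (nat \<lfloor>c * real k\<rfloor>) (\<epsilon> * a k)" for k
  define B where "B n = (\<Sum>k\<in>{N n<..N (Suc n)}. g k)" for n
  define T where "T n = prob (\<Union>m\<in>{1..N n}. EE ({m} \<times> {1..nat \<lfloor>c * real m\<rfloor>}) (t n))" for n
  have Nmono: "N n \<le> N (Suc n)" for n unfolding N_def using NN_props[OF q] by auto
  have N1: "1 \<le> N n" for n unfolding N_def using NN_props[OF q] by auto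
  have Nup: "real (N n) \<le> q ^ Suc n" for n unfolding N_def using NN_props[OF q] by auto
  have Nlo: "q ^ Suc n - 1 < real (N n)" for n unfolding N_def using NN_props[OF q] by auto
  have Nunb: "\<And>L. \<exists>M. L \<le> N M" unfolding N_def using NN_props[OF q] by auto
  have g0: "0 \<le> g k" for k unfolding g_def by (rule ppi_nonneg)
  have P0: "0 \<le> P n" for n unfolding P_def by (rule ppi_nonneg)
  have sT': "summable T" using sT unfolding T_def t_def N_def .
  then have "T \<longlonglongrightarrow> 0" by (rule summable_LIMSEQ_zero)
  then have "eventually (\<lambda>n. dist (T n) 0 < 1/2) sequentially" by (rule tendstoD) simp
  then obtain n1 where n1': "\<And>n. n \<ge> n1 \<Longrightarrow> dist (T n) 0 < 1/2"
    by (auto simp: eventually_sequentially)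
  have n1: "T n \<le> 1/2" if "n \<ge> n1" for n
    using n1'[OF that] by (simp add: dist_real_def)
  obtain K where K: "K > 0" "\<And>n m t. 4 \<le> m \<Longrightarrow> real n \<le> (8 * q) * real m \<Longrightarrow> ppi n t \<le> K * ppi m t"
    using ppi_red[of "8 * q"] q by auto
  obtain n0 where n0: "\<And>n. n \<ge> n0 \<Longrightarrow> max (32 / c) 2 \<le> q ^ n"
    using qpow_ev[OF q] by blast
  have main: "B n \<le> (8 * q * K) * T n" if n: "n \<ge> max n0 n1" for n
  proof -
    define Q where "Q = q ^ Suc n"
    have "q ^ n \<le> Q" unfolding Q_def using q by (intro power_increasing) auto
    then have Q32: "32 / c \<le> Q" and Q2: "2 \<le> Q" using n0[of n] n by auto
    have cQ: "32 \<le> c * Q" using Q32 c by (simp add: field_simps)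
    have NS: "real (N (Suc n)) \<le> q * Q" using Nup[of "Suc n"] unfolding Q_def by simp
    have Nn: "real (N n) \<le> Q" using Nup[of n] unfolding Q_def by simp
    have Nnlo: "Q / 2 \<le> real (N n)" using Nlo[of n] Q2 unfolding Q_def by simp
    define S where "S = (\<Sum>m\<in>{1..N n}. ppi (nat \<lfloor>c * real m\<rfloor>) (t n))"
    have S_le: "S \<le> 2 * T n"
      unfolding S_def T_def by (rule rows_union_ge) (use n1[of n] n in \<open>auto simp: T_def\<close>)
    define Ms where "Ms = {N n div 2 + 1..N n}"
    have Ms_sub: "Ms \<subseteq> {1..N n}" unfolding Ms_def by auto
    have each: "P n \<le> K * ppi (nat \<lfloor>c * real m\<rfloor>) (t n)" if m: "m \<in> Ms" for m
    proof -
      have "N n div 2 + 1 \<le> m" using m unfolding Ms_def by simp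
      then have "N n < 2 * m" by linarith
      then have "real (N n) < 2 * real m" by (metis of_nat_less_iff of_nat_mult of_nat_numeral)
      then have mQ: "Q / 4 \<le> real m" using Nnlo by simp
      have cm: "c * Q / 4 \<le> c * real m" using mQ c by (simp add: field_simps)
      have flm: "c * real m / 2 \<le> real (nat \<lfloor>c * real m\<rfloor>)" using cm cQ by (intro fl_half) linarith
      have m4: "4 \<le> nat \<lfloor>c * real m\<rfloor>" using flm cm cQ by linarith
      have "real (nat \<lfloor>c * real (N (Suc n))\<rfloor>) \<le> c * real (N (Suc n))" using c by (intro fl_le) simp
      also have "\<dots> \<le> c * (q * Q)" using NS c by simp
      also have "\<dots> = (8 * q) * (c * Q / 8)" by simp
      also have "\<dots> \<le> (8 * q) * real (nat \<lfloor>c * real m\<rfloor>)"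
        using flm cm q by (intro mult_left_mono) auto
      finally show ?thesis unfolding P_def using K(2) m4 by blast
    qed
    have "real (card Ms) * P n \<le> (\<Sum>m\<in>Ms. K * ppi (nat \<lfloor>c * real m\<rfloor>) (t n))"
      using each by (rule sum_bounded_below)
    also have "\<dots> = K * (\<Sum>m\<in>Ms. ppi (nat \<lfloor>c * real m\<rfloor>) (t n))" by (simp add: sum_distrib_left)
    also have "\<dots> \<le> K * S" unfolding S_def using K(1) Ms_sub
      by (intro mult_left_mono sum_mono2) (auto intro: ppi_nonneg)
    finally have cardP: "real (card Ms) * P n \<le> K * S" .
    have "card Ms = N n - N n div 2" unfolding Ms_def by simp
    then have "real (N n) \<le> 2 * real (card Ms)" by linarith
    then have "real (N n) * P n \<le> 2 * real (card Ms) * P n" using P0 by (intro mult_right_mono) auto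
    also have "\<dots> \<le> 2 * (K * S)" using cardP by simp
    also have "\<dots> \<le> 2 * (K * (2 * T n))" using S_le K(1) by simp
    finally have NP: "real (N n) * P n \<le> 4 * K * T n" by simp
    have geach: "g k \<le> P n" if k: "k \<in> {N n<..N (Suc n)}" for k
    proof -
      have kN: "N n \<le> k" "k \<le> N (Suc n)" using k by auto
      have "a (N n) \<le> a k" using kN N1[of n] by (intro amono_le[of a, OF amono])
      then have "t n \<le> \<epsilon> * a k" unfolding t_def using eps by simp
      then have "g k \<le> ppi (nat \<lfloor>c * real k\<rfloor>) (t n)" unfolding g_def by (rule ppi_anti)
      also have "\<dots> \<le> P n" unfolding P_def using c kN by (intro ppi_mono fl_mono) auto
      finally show ?thesis .
    qed
    have "B n \<le> real (card {N n<..N (Suc n)}) * P n"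
      unfolding B_def using geach by (rule sum_bounded_above)
    also have "real (card {N n<..N (Suc n)}) \<le> real (N (Suc n))" by simp
    then have "real (card {N n<..N (Suc n)}) * P n \<le> real (N (Suc n)) * P n"
      using P0 by (intro mult_right_mono) auto
    also have "real (N (Suc n)) \<le> 2 * q * real (N n)"
    proof -
      have "q * Q \<le> q * (2 * real (N n))" using Nnlo q by (intro mult_left_mono) auto
      then show ?thesis using NS by simp
    qed
    then have "real (N (Suc n)) * P n \<le> 2 * q * real (N n) * P n" using P0 by (intro mult_right_mono) auto
    also have "\<dots> = 2 * q * (real (N n) * P n)" by simp
    also have "\<dots> \<le> 2 * q * (4 * K * T n)" using NP q by (intro mult_left_mono) auto
    finally show ?thesis by simp
  qed
  have sB: "summable B"
  proof (rule summable_comparison_test'[OF summable_mult[OF sT', of "8 * q * K"]])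
    fix n assume "max n0 n1 \<le> n"
    have "0 \<le> B n" unfolding B_def using g0 by (intro sum_nonneg) auto
    then show "norm (B n) \<le> (8 * q * K) * T n" using main[OF \<open>max n0 n1 \<le> n\<close>] by simp
  qed
  have "summable g" using block_summable_rev[of N g, OF Nmono Nunb g0] sB unfolding B_def by blast
  then show ?thesis unfolding g_def[abs_def] .
qed

end

theorem lemma3p1:
  fixes M :: "'s measure"
    and U V :: "nat \<Rightarrow> nat \<Rightarrow> 's \<Rightarrow> real"
    and a :: "nat \<Rightarrow> real"
    and c q :: real
  assumes "prob_space M"
    and indep: "prob_space.indep_vars M (\<lambda>_. borel \<Otimes>\<^sub>M borel)
                  (\<lambda>(k, i) x. (U k i x, V k i x)) ({1..} \<times> {1..})"
    and ident: "\<And>k i. k \<ge> 1 \<Longrightarrow> i \<ge> 1 \<Longrightarrow>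
                  distr M (borel \<Otimes>\<^sub>M borel) (\<lambda>x. (U k i x, V k i x))
                  = distr M (borel \<Otimes>\<^sub>M borel) (\<lambda>x. (U 1 1 x, V 1 1 x))"
    and apos: "\<And>n. n \<ge> 1 \<Longrightarrow> a n > 0"
    and amono: "\<And>n. n \<ge> 1 \<Longrightarrow> a n \<le> a (Suc n)"
    and alim: "(\<lambda>n. a (Suc n) / a n) \<longlonglongrightarrow> 1"
    and aliminf: "liminf (\<lambda>n. ereal (a (2 * n) / a n)) > 1"
    and "c > 0" and "q > 1"
  shows
    "(summable (\<lambda>n. measure M {x \<in> space M. \<exists>i j. 1 \<le> i \<and> 1 \<le> j \<and> i \<noteq> j
         \<and> i \<le> Suc n \<and> j \<le> Suc n \<and> \<bar>U 1 i x * V 1 j x\<bar> \<ge> a (Suc n)})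
      \<longleftrightarrow>
     (\<forall>\<epsilon>>0. summable (\<lambda>n. measure M {x \<in> space M. \<exists>i j. 1 \<le> i \<and> 1 \<le> j \<and> i \<noteq> j
         \<and> real i \<le> c * real (Suc n) \<and> real j \<le> c * real (Suc n)
         \<and> \<bar>U 1 i x * V 1 j x\<bar> \<ge> \<epsilon> * a (Suc n)})))
   \<and>
    ((\<forall>\<epsilon>>0. summable (\<lambda>n. measure M {x \<in> space M. \<exists>i j. 1 \<le> i \<and> 1 \<le> j \<and> i \<noteq> j
         \<and> real i \<le> c * real (Suc n) \<and> real j \<le> c * real (Suc n)
         \<and> \<bar>U 1 i x * V 1 j x\<bar> \<ge> \<epsilon> * a (Suc n)}))
      \<longleftrightarrow>
     (\<forall>\<epsilon>>0. summable (\<lambda>n. measure M {x \<in> space M. \<exists>m i j. 1 \<le> m \<and> real m \<le> q ^ Suc n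
         \<and> 1 \<le> i \<and> 1 \<le> j \<and> i \<noteq> j
         \<and> real i \<le> c * real m \<and> real j \<le> c * real m
         \<and> \<bar>U m i x * V m j x\<bar> \<ge> \<epsilon> * a (nat \<lfloor>q ^ Suc n\<rfloor>)})))"
proof -
  define X where "X = (\<lambda>(k, i) x. (U k i x, V k i x))"
  have Xki: "X (k, i) = (\<lambda>x. (U k i x, V k i x))" for k i unfolding X_def by simp
  have "iidarr M X"
    unfolding iidarr_def iidarr_axioms_def
  proof (intro conjI allI impI)
    show "prob_space M" by fact
    show "prob_space.indep_vars M (\<lambda>_. borel \<Otimes>\<^sub>M borel) X ({1..} \<times> {1..})"
      using indep unfolding X_def .
  next
    fix k i :: nat assume "1 \<le> k" "1 \<le> i"
    then show "distr M (borel \<Otimes>\<^sub>M borel) (X (k, i)) = distr M (borel \<Otimes>\<^sub>M borel) (X (1, 1))"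
      unfolding Xki by (rule ident)
  qed
  then interpret iidarr M X .
  have rowEq: "{x \<in> space M. \<exists>i j. 1 \<le> i \<and> 1 \<le> j \<and> i \<noteq> j \<and> PP i \<and> PP j \<and> tt \<le> \<bar>U kk i x * V kk j x\<bar>}
      = EE ({kk} \<times> {1..nn}) tt" if PP: "\<And>i. 1 \<le> i \<Longrightarrow> PP i = (i \<le> nn)" for PP nn kk tt
  proof (intro set_eqI iffI)
    fix x assume "x \<in> {x \<in> space M. \<exists>i j. 1 \<le> i \<and> 1 \<le> j \<and> i \<noteq> j \<and> PP i \<and> PP j \<and> tt \<le> \<bar>U kk i x * V kk j x\<bar>}"
    then obtain i j where ij: "x \<in> space M" "1 \<le> i" "1 \<le> j" "i \<noteq> j" "PP i" "PP j" "tt \<le> \<bar>U kk i x * V kk j x\<bar>"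
      by auto
    have "i \<le> nn" "j \<le> nn" using ij PP by auto
    then have mem: "(kk, i) \<in> {kk} \<times> {1..nn}" "(kk, j) \<in> {kk} \<times> {1..nn}" using ij by auto
    have "hasp ({kk} \<times> {1..nn}) tt (\<lambda>s. X s x)"
      unfolding hasp_def using ij by (intro bexI[OF _ mem(1)] bexI[OF _ mem(2)]) (simp add: Xki)
    then show "x \<in> EE ({kk} \<times> {1..nn}) tt" unfolding EE_def using ij by simp
  next
    fix x assume "x \<in> EE ({kk} \<times> {1..nn}) tt"
    then have x: "x \<in> space M" and h: "hasp ({kk} \<times> {1..nn}) tt (\<lambda>s. X s x)" unfolding EE_def by auto
    then obtain s s' where ss: "s \<in> {kk} \<times> {1..nn}" "s' \<in> {kk} \<times> {1..nn}" "s \<noteq> s'"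
      "tt \<le> \<bar>fst (X s x) * snd (X s' x)\<bar>" unfolding hasp_def by auto
    obtain i where i: "s = (kk, i)" "1 \<le> i" "i \<le> nn" using ss(1) by auto
    obtain j where j: "s' = (kk, j)" "1 \<le> j" "j \<le> nn" using ss(2) by auto
    have ne: "i \<noteq> j" using ss(3) i j by auto
    have pp: "PP i" "PP j" using PP i j by auto
    have tl: "tt \<le> \<bar>U kk i x * V kk j x\<bar>" using ss(4) i j by (simp add: Xki)
    have "\<exists>i j. 1 \<le> i \<and> 1 \<le> j \<and> i \<noteq> j \<and> PP i \<and> PP j \<and> tt \<le> \<bar>U kk i x * V kk j x\<bar>"
      by (rule exI[where x=i], rule exI[where x=j]) (use ne pp tl i(2) j(2) in simp)
    then show "x \<in> {x \<in> space M. \<exists>i j. 1 \<le> i \<and> 1 \<le> j \<and> i \<noteq> j \<and> PP i \<and> PP j \<and> tt \<le> \<bar>U kk i x * V kk j x\<bar>}"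
      unfolding mem_Collect_eq using x by (rule conjI[rotated])
  qed
  have e1: "measure M {x \<in> space M. \<exists>i j. 1 \<le> i \<and> 1 \<le> j \<and> i \<noteq> j
         \<and> i \<le> Suc n \<and> j \<le> Suc n \<and> \<bar>U 1 i x * V 1 j x\<bar> \<ge> a (Suc n)} = ppi (Suc n) (a (Suc n))" for n
  proof -
    have "{x \<in> space M. \<exists>i j. 1 \<le> i \<and> 1 \<le> j \<and> i \<noteq> j
         \<and> i \<le> Suc n \<and> j \<le> Suc n \<and> \<bar>U 1 i x * V 1 j x\<bar> \<ge> a (Suc n)} = EE ({1} \<times> {1..Suc n}) (a (Suc n))"
      by (rule rowEq) simp
    then show ?thesis unfolding ppi_def by simp
  qed
  have e2: "measure M {x \<in> space M. \<exists>i j. 1 \<le> i \<and> 1 \<le> j \<and> i \<noteq> j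
         \<and> real i \<le> c * real (Suc n) \<and> real j \<le> c * real (Suc n)
         \<and> \<bar>U 1 i x * V 1 j x\<bar> \<ge> \<epsilon> * a (Suc n)} = ppi (nat \<lfloor>c * real (Suc n)\<rfloor>) (\<epsilon> * a (Suc n))" for n \<epsilon>
  proof -
    have "{x \<in> space M. \<exists>i j. 1 \<le> i \<and> 1 \<le> j \<and> i \<noteq> j
         \<and> real i \<le> c * real (Suc n) \<and> real j \<le> c * real (Suc n)
         \<and> \<bar>U 1 i x * V 1 j x\<bar> \<ge> \<epsilon> * a (Suc n)} = EE ({1} \<times> {1..nat \<lfloor>c * real (Suc n)\<rfloor>}) (\<epsilon> * a (Suc n))"
      by (rule rowEq) (simp add: fl_iff)
    then show ?thesis unfolding ppi_def by simp
  qed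
  have e3: "measure M {x \<in> space M. \<exists>m i j. 1 \<le> m \<and> real m \<le> q ^ Suc n
         \<and> 1 \<le> i \<and> 1 \<le> j \<and> i \<noteq> j
         \<and> real i \<le> c * real m \<and> real j \<le> c * real m
         \<and> \<bar>U m i x * V m j x\<bar> \<ge> \<epsilon> * a (nat \<lfloor>q ^ Suc n\<rfloor>)}
     = prob (\<Union>m\<in>{1..nat \<lfloor>q ^ Suc n\<rfloor>}. EE ({m} \<times> {1..nat \<lfloor>c * real m\<rfloor>}) (\<epsilon> * a (nat \<lfloor>q ^ Suc n\<rfloor>)))" for n \<epsilon>
  proof -
    define t where "t = \<epsilon> * a (nat \<lfloor>q ^ Suc n\<rfloor>)"
    have "{x \<in> space M. \<exists>m i j. 1 \<le> m \<and> real m \<le> q ^ Suc n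
         \<and> 1 \<le> i \<and> 1 \<le> j \<and> i \<noteq> j
         \<and> real i \<le> c * real m \<and> real j \<le> c * real m
         \<and> \<bar>U m i x * V m j x\<bar> \<ge> t}
      = (\<Union>m\<in>{1..nat \<lfloor>q ^ Suc n\<rfloor>}. {x \<in> space M. \<exists>i j. 1 \<le> i \<and> 1 \<le> j \<and> i \<noteq> j
         \<and> real i \<le> c * real m \<and> real j \<le> c * real m \<and> t \<le> \<bar>U m i x * V m j x\<bar>})"
      (is "?L = ?R")
    proof (intro set_eqI iffI)
      fix x assume "x \<in> ?L"
      then obtain m i j where h: "x \<in> space M" "1 \<le> m" "real m \<le> q ^ Suc n" "1 \<le> i" "1 \<le> j" "i \<noteq> j"
        "real i \<le> c * real m" "real j \<le> c * real m" "t \<le> \<bar>U m i x * V m j x\<bar>" by auto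
      have mem: "m \<in> {1..nat \<lfloor>q ^ Suc n\<rfloor>}" using h(2,3) fl_iff[OF h(2)] by auto
      have ex: "\<exists>i j. 1 \<le> i \<and> 1 \<le> j \<and> i \<noteq> j
         \<and> real i \<le> c * real m \<and> real j \<le> c * real m \<and> t \<le> \<bar>U m i x * V m j x\<bar>"
        by (rule exI[where x=i], rule exI[where x=j]) (use h in simp)
      have "x \<in> {x \<in> space M. \<exists>i j. 1 \<le> i \<and> 1 \<le> j \<and> i \<noteq> j
         \<and> real i \<le> c * real m \<and> real j \<le> c * real m \<and> t \<le> \<bar>U m i x * V m j x\<bar>}"
        unfolding mem_Collect_eq using h(1) ex by (rule conjI)
      then show "x \<in> ?R" by (rule UN_I[OF mem])
    next
      fix x assume "x \<in> ?R"
      then obtain m i j where h: "m \<in> {1..nat \<lfloor>q ^ Suc n\<rfloor>}" "x \<in> space M" "1 \<le> i" "1 \<le> j" "i \<noteq> j"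
        "real i \<le> c * real m" "real j \<le> c * real m" "t \<le> \<bar>U m i x * V m j x\<bar>" by auto
      have mm: "1 \<le> m" "real m \<le> q ^ Suc n" using h(1) fl_iff[of m "q ^ Suc n"] by auto
      have "\<exists>m i j. 1 \<le> m \<and> real m \<le> q ^ Suc n
         \<and> 1 \<le> i \<and> 1 \<le> j \<and> i \<noteq> j
         \<and> real i \<le> c * real m \<and> real j \<le> c * real m
         \<and> \<bar>U m i x * V m j x\<bar> \<ge> t"
        by (rule exI[where x=m], rule exI[where x=i], rule exI[where x=j]) (use h mm in simp)
      then show "x \<in> ?L" unfolding mem_Collect_eq using h(2) by (rule conjI[rotated])
    qed
    also have "?R = (\<Union>m\<in>{1..nat \<lfloor>q ^ Suc n\<rfloor>}. EE ({m} \<times> {1..nat \<lfloor>c * real m\<rfloor>}) t)"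
      by (intro SUP_cong refl rowEq) (simp add: fl_iff)
    finally show ?thesis unfolding t_def by simp
  qed
  have A: "summable (\<lambda>n. ppi n (a n)) \<longleftrightarrow> (\<forall>\<epsilon>>0. summable (\<lambda>k. ppi (nat \<lfloor>c * real k\<rfloor>) (\<epsilon> * a k)))"
  proof
    assume "summable (\<lambda>n. ppi n (a n))"
    then show "\<forall>\<epsilon>>0. summable (\<lambda>k. ppi (nat \<lfloor>c * real k\<rfloor>) (\<epsilon> * a k))"
      using partA_12[of a, OF apos amono aliminf \<open>c > 0\<close>] by blast
  next
    assume "\<forall>\<epsilon>>0. summable (\<lambda>k. ppi (nat \<lfloor>c * real k\<rfloor>) (\<epsilon> * a k))"
    then have "summable (\<lambda>k. ppi (nat \<lfloor>c * real k\<rfloor>) (1 * a k))" by (meson zero_less_one)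
    then show "summable (\<lambda>n. ppi n (a n))" using partA_21[OF \<open>c > 0\<close>] by simp
  qed
  have B: "summable (\<lambda>k. ppi (nat \<lfloor>c * real k\<rfloor>) (\<epsilon> * a k)) \<longleftrightarrow>
      summable (\<lambda>n. prob (\<Union>m\<in>{1..nat \<lfloor>q ^ Suc n\<rfloor>}. EE ({m} \<times> {1..nat \<lfloor>c * real m\<rfloor>}) (\<epsilon> * a (nat \<lfloor>q ^ Suc n\<rfloor>))))"
    if "\<epsilon> > 0" for \<epsilon>
    using partB_23[of a, OF amono \<open>c > 0\<close> \<open>q > 1\<close> that] partB_32[of a, OF amono \<open>c > 0\<close> \<open>q > 1\<close> that] by blast
  have S1: "summable (\<lambda>n. ppi (Suc n) (a (Suc n))) \<longleftrightarrow> summable (\<lambda>n. ppi n (a n))"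
    by (rule summable_Suc_iff)
  have S2: "summable (\<lambda>n. ppi (nat \<lfloor>c * real (Suc n)\<rfloor>) (\<epsilon> * a (Suc n))) \<longleftrightarrow>
      summable (\<lambda>k. ppi (nat \<lfloor>c * real k\<rfloor>) (\<epsilon> * a k))" for \<epsilon>
    by (rule summable_Suc_iff)
  have C: "(\<forall>\<epsilon>>0. summable (\<lambda>k. ppi (nat \<lfloor>c * real k\<rfloor>) (\<epsilon> * a k))) \<longleftrightarrow>
      (\<forall>\<epsilon>>0. summable (\<lambda>n. prob (\<Union>m\<in>{1..nat \<lfloor>q ^ Suc n\<rfloor>}. EE ({m} \<times> {1..nat \<lfloor>c * real m\<rfloor>}) (\<epsilon> * a (nat \<lfloor>q ^ Suc n\<rfloor>)))))"
    using B by auto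
  show ?thesis unfolding e1 e2 e3 S1 S2 using A C by simp
qed

end
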